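(* Let $G$ be a connected Lie group with identity $e$ and consider a discrete-time linear control system on $G$ with control range $U\subset\mathbb{R}^m$ a compact neighborhood of $0$. Let $H$ be a connected Lie subgroup of $G$ and suppose there is a neighborhood $B$ of $e$ in $H$ with $B\subset H\cap\mathcal{R}$ which is invariant under $f_0$ and $f_0^{-1}$. Then $H$ is $f_0$-invariant and $H\subset\mathcal{R}$.
   Context: A discrete-time linear control system on $G$ is given by $f:G\times U\to G$, $f_u:=f(\cdot,u)$, such that $f_0$ is an automorphism of $G$ and $f_u(g)=f_u(e)f_0(g)$ for all $g\in G,u\in U$. Solutions: $\varphi(0,g,u)=g$, $\varphi(k,g,u)=f_{u_{k-1}}\circ\cdots\circ f_{u_0}(g)$ for $u=(u_i)\in U^{\mathbb{N}_0}$; $\mathcal{R}=\bigcup_{k\in\mathbb{N}}\{\varphi(k,e,u)\}$. A set $S$ is invariant under a map $\psi$ if $\psi(S)\subset S$. *)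

theory Defs
  imports "HOL-Analysis.Analysis" "HOL-Algebra.Group"
begin

text \<open>By Gleason--Montgomery--Zippin such a group carries a
  unique compatible smooth (even analytic) Lie group structure.\<close>
definition lie_group :: "('g, 'b) monoid_scheme \<Rightarrow> 'g topology \<Rightarrow> bool" where
  "lie_group G T \<longleftrightarrow>
     group G \<and> topspace T = carrier G \<and> Hausdorff_space T \<and>
     continuous_map (prod_topology T T) T (\<lambda>(x, y). x \<otimes>\<^bsub>G\<^esub> y) \<and>
     continuous_map T T (\<lambda>x. inv\<^bsub>G\<^esub> x) \<and>
     (\<exists>n. \<forall>x\<in>topspace T. \<exists>W. openin T W \<and> x \<in> W \<and>
        (\<exists>V. openin (Euclidean_space n) V \<and>
              subtopology T W homeomorphic_space subtopology (Euclidean_space n) V))"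

text \<open>A Lie subgroup of (G,T): a subgroup H with its own Lie group topology TH
  such that the inclusion H \<rightarrow> G is continuous (hence an injective immersion).\<close>
definition lie_subgroup ::
  "'g set \<Rightarrow> 'g topology \<Rightarrow> ('g, 'b) monoid_scheme \<Rightarrow> 'g topology \<Rightarrow> bool" where
  "lie_subgroup H TH G T \<longleftrightarrow>
     subgroup H G \<and> lie_group (G\<lparr>carrier := H\<rparr>) TH \<and> continuous_map TH T (\<lambda>x. x)"

definition linear_control_system ::
  "('g, 'b) monoid_scheme \<Rightarrow> 'g topology \<Rightarrow> 'u set \<Rightarrow> ('g \<Rightarrow> 'u::zero \<Rightarrow> 'g) \<Rightarrow> bool" where
  "linear_control_system G T U f \<longleftrightarrow>
     0 \<in> U \<and>
     (\<forall>g\<in>carrier G. \<forall>u\<in>U. f g u \<in> carrier G) \<and>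
     (\<lambda>g. f g 0) \<in> hom G G \<and> bij_betw (\<lambda>g. f g 0) (carrier G) (carrier G) \<and>
     homeomorphic_map T T (\<lambda>g. f g 0) \<and>
     (\<forall>g\<in>carrier G. \<forall>u\<in>U. f g u = f (\<one>\<^bsub>G\<^esub>) u \<otimes>\<^bsub>G\<^esub> f g 0)"

primrec phi :: "('g \<Rightarrow> 'u \<Rightarrow> 'g) \<Rightarrow> nat \<Rightarrow> 'g \<Rightarrow> (nat \<Rightarrow> 'u) \<Rightarrow> 'g" where
  "phi f 0 g u = g"
| "phi f (Suc k) g u = f (phi f k g u) (u k)"

definition reachable :: "('g, 'b) monoid_scheme \<Rightarrow> 'u set \<Rightarrow> ('g \<Rightarrow> 'u \<Rightarrow> 'g) \<Rightarrow> 'g set" where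
  "reachable G U f = {phi f k (\<one>\<^bsub>G\<^esub>) u | k u. k \<ge> 1 \<and> (\<forall>i. u i \<in> U)}"

end

theory Submission
  imports Defs
begin

inductive_set sgen :: "('a,'c) monoid_scheme \<Rightarrow> 'a set \<Rightarrow> 'a set" for K V where
  base: "v \<in> V \<Longrightarrow> v \<in> sgen K V"
| step: "s \<in> sgen K V \<Longrightarrow> v \<in> V \<Longrightarrow> s \<otimes>\<^bsub>K\<^esub> v \<in> sgen K V"

lemma conn_gen:
  fixes K (structure)
  assumes grp: "group K" and tp: "topspace X = carrier K"
    and cmul: "continuous_map (prod_topology X X) X (\<lambda>(x,y). x \<otimes>\<^bsub>K\<^esub> y)"
    and cinv: "continuous_map X X (\<lambda>x. inv\<^bsub>K\<^esub> x)"
    and conn: "connected_space X" and oV: "openin X V" and oneV: "\<one>\<^bsub>K\<^esub> \<in> V"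
  shows "sgen K V = carrier K"
proof -
  interpret group K by (rule grp)
  have Vc: "V \<subseteq> carrier K" using openin_subset[OF oV] tp by simp
  have Sc: "sgen K V \<subseteq> carrier K"
  proof
    fix x assume "x \<in> sgen K V" then show "x \<in> carrier K"
      by induction (use Vc in auto)
  qed
  have cm: "continuous_map X X (\<lambda>y. a \<otimes> y)" if "a \<in> carrier K" for a
  proof -
    have "continuous_map X (prod_topology X X) (\<lambda>y. (a, y))"
      using that tp by (intro continuous_map_pairedI) auto
    from continuous_map_compose[OF this cmul] show ?thesis by (simp add: o_def)
  qed
  have cm2: "continuous_map X X (\<lambda>y. inv y \<otimes> a)" if "a \<in> carrier K" for a
  proof -
    have "continuous_map X (prod_topology X X) (\<lambda>y. (inv y, a))"
      using that tp cinv by (intro continuous_map_pairedI) auto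
    from continuous_map_compose[OF this cmul] show ?thesis by (simp add: o_def)
  qed
  have op: "openin X (sgen K V)"
  proof (subst openin_subopen, intro ballI)
    fix s assume s: "s \<in> sgen K V"
    hence sc: "s \<in> carrier K" using Sc by auto
    let ?N = "{y \<in> topspace X. inv s \<otimes> y \<in> V}"
    have "openin X ?N" by (rule openin_continuous_map_preimage[OF cm oV]) (use sc in auto)
    moreover have "s \<in> ?N" using sc tp oneV by auto
    moreover have "?N \<subseteq> sgen K V"
    proof
      fix y assume y: "y \<in> ?N"
      hence yc: "y \<in> carrier K" using tp by auto
      have "s \<otimes> (inv s \<otimes> y) \<in> sgen K V" using y s by (auto intro: sgen.step)
      thus "y \<in> sgen K V" using sc yc by (simp add: m_assoc[symmetric])
    qed
    ultimately show "\<exists>T. openin X T \<and> s \<in> T \<and> T \<subseteq> sgen K V" by blast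
  qed
  have cl: "openin X (topspace X - sgen K V)"
  proof (subst openin_subopen, intro ballI)
    fix x assume x: "x \<in> topspace X - sgen K V"
    hence xc: "x \<in> carrier K" using tp by auto
    let ?N = "{y \<in> topspace X. inv y \<otimes> x \<in> V}"
    have "openin X ?N" by (rule openin_continuous_map_preimage[OF cm2[OF xc] oV])
    moreover have "x \<in> ?N" using xc tp oneV x by auto
    moreover have "?N \<subseteq> topspace X - sgen K V"
    proof
      fix y assume y: "y \<in> ?N"
      hence yc: "y \<in> carrier K" using tp by auto
      show "y \<in> topspace X - sgen K V"
      proof (rule ccontr)
        assume "y \<notin> topspace X - sgen K V"
        hence "y \<in> sgen K V" using y by auto
        hence "y \<otimes> (inv y \<otimes> x) \<in> sgen K V" using y by (auto intro: sgen.step)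
        hence "x \<in> sgen K V" using xc yc by (simp add: m_assoc[symmetric])
        thus False using x by auto
      qed
    qed
    ultimately show "\<exists>T. openin X T \<and> x \<in> T \<and> T \<subseteq> topspace X - sgen K V" by blast
  qed
  have clo: "closedin X (sgen K V)" unfolding closedin_def using cl Sc tp by blast
  have ne: "\<one> \<in> sgen K V" by (rule sgen.base[OF oneV])
  have disj: "sgen K V = {} \<or> sgen K V = topspace X"
    using conn[unfolded connected_space_clopen_in, rule_format, OF conjI[OF op clo]] .
  have "sgen K V = topspace X" using disj ne by blast
  thus ?thesis using tp by simp
qed

lemma phi_add: "phi f (k + l) g w = phi f l (phi f k g w) (\<lambda>i. w (k+i))"
  by (induction l) auto

lemma phi_cong: "(\<forall>i<k. u i = w i) \<Longrightarrow> phi f k g u = phi f k g w"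
  by (induction k) auto

lemma funpow_carrier:
  assumes "linear_control_system G T U f" "g \<in> carrier G"
  shows "((\<lambda>g. f g 0) ^^ k) g \<in> carrier G"
proof -
  have fc: "\<And>g v. g \<in> carrier G \<Longrightarrow> v \<in> U \<Longrightarrow> f g v \<in> carrier G" "0 \<in> U"
    using assms(1) unfolding linear_control_system_def by blast+
  show ?thesis by (induction k) (use fc assms(2) in auto)
qed

lemma phi_carrier:
  assumes "linear_control_system G T U f" "g \<in> carrier G" "\<forall>i. u i \<in> U"
  shows "phi f k g u \<in> carrier G"
proof -
  have fc: "\<And>g v. g \<in> carrier G \<Longrightarrow> v \<in> U \<Longrightarrow> f g v \<in> carrier G"
    using assms(1) unfolding linear_control_system_def by blast
  show ?thesis by (induction k) (use fc assms(2,3) in auto)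
qed

lemma phi_split:
  fixes G (structure)
  assumes lcs: "linear_control_system G T U f" and grp: "group G"
    and g: "g \<in> carrier G" and u: "\<forall>i. u i \<in> U"
  shows "phi f k g u = phi f k \<one>\<^bsub>G\<^esub> u \<otimes>\<^bsub>G\<^esub> ((\<lambda>g. f g 0) ^^ k) g"
proof (induction k)
  case 0
  then show ?case using g grp by (simp add: group.is_monoid)
next
  case (Suc k)
  interpret group G by (rule grp)
  let ?F = "\<lambda>g. f g 0"
  have hom: "?F \<in> hom G G" using lcs by (simp add: linear_control_system_def)
  have c1: "phi f k \<one> u \<in> carrier G" by (rule phi_carrier[OF lcs _ u]) simp
  have c2: "(?F ^^ k) g \<in> carrier G" by (rule funpow_carrier[OF lcs g])
  have c3: "phi f k g u \<in> carrier G" by (rule phi_carrier[OF lcs g u])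
  have uk: "u k \<in> U" using u by auto
  have fu: "\<And>g v. g \<in> carrier G \<Longrightarrow> v \<in> U \<Longrightarrow> f g v = f \<one> v \<otimes> f g 0"
    using lcs unfolding linear_control_system_def by blast
  have f1: "f \<one> (u k) \<in> carrier G" using lcs uk unfolding linear_control_system_def by blast
  have "phi f (Suc k) g u = f \<one> (u k) \<otimes> ?F (phi f k g u)"
    using fu[OF c3 uk] by simp
  also have "\<dots> = f \<one> (u k) \<otimes> (?F (phi f k \<one> u) \<otimes> ?F ((?F ^^ k) g))"
    using Suc hom_mult[OF hom c1 c2] by simp
  also have "\<dots> = (f \<one> (u k) \<otimes> ?F (phi f k \<one> u)) \<otimes> (?F ^^ Suc k) g"
  proof -
    have "?F (phi f k \<one> u) \<in> carrier G" "?F ((?F ^^ k) g) \<in> carrier G"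
      using hom c1 c2 by (auto intro: hom_in_carrier)
    thus ?thesis using f1 by (simp add: m_assoc)
  qed
  also have "f \<one> (u k) \<otimes> ?F (phi f k \<one> u) = phi f (Suc k) \<one> u"
    using fu[OF c1 uk] by simp
  finally show ?case .
qed

theorem corollary2p17:
  fixes G :: "('g, 'b) monoid_scheme" and T :: "'g topology"
    and U :: "(real ^ 'm) set" and f :: "'g \<Rightarrow> real ^ 'm \<Rightarrow> 'g"
    and H :: "'g set" and TH :: "'g topology" and B :: "'g set"
  assumes "lie_group G T" and "connected_space T"
    and "compact U" and "0 \<in> interior U"
    and "linear_control_system G T U f"
    and "lie_subgroup H TH G T" and "connected_space TH"
    and "\<exists>V. openin TH V \<and> \<one>\<^bsub>G\<^esub> \<in> V \<and> V \<subseteq> B"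
    and "B \<subseteq> H \<inter> reachable G U f"
    and "(\<lambda>g. f g 0) ` B \<subseteq> B"
    and "inv_into (carrier G) (\<lambda>g. f g 0) ` B \<subseteq> B"
  shows "(\<lambda>g. f g 0) ` H \<subseteq> H \<and> H \<subseteq> reachable G U f"
proof -
  note A = assms
  let ?F = "\<lambda>g. f g 0"
  let ?Fi = "inv_into (carrier G) ?F"
  let ?R = "reachable G U f"
  let ?K = "G\<lparr>carrier := H\<rparr>"
  obtain V where oV: "openin TH V" and oneV: "\<one>\<^bsub>G\<^esub> \<in> V" and VB: "V \<subseteq> B"
    using A(8) by blast
  have grp: "group G" using A(1) unfolding lie_group_def by blast
  interpret group G by (rule grp)
  have lcs: "linear_control_system G T U f" by (rule A(5))
  have sub: "subgroup H G" and lK: "lie_group ?K TH"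
    using A(6) by (auto simp: lie_subgroup_def)
  have Hc: "H \<subseteq> carrier G" using sub by (rule subgroup.subset)
  have hom: "?F \<in> hom G G" and bij: "bij_betw ?F (carrier G) (carrier G)"
    using lcs by (auto simp: linear_control_system_def)
  note L = lK[unfolded lie_group_def]
  have sgH: "sgen ?K V = H"
  proof -
    have "sgen ?K V = carrier ?K"
      apply (rule conn_gen[where X=TH])
      using L apply blast
      using L apply blast
      using L apply blast
      using L apply blast
      using A(7) apply blast
      using oV apply blast
      using oneV apply simp
      done
    thus ?thesis by simp
  qed
  have sgK: "x \<in> sgen G V" if "x \<in> sgen ?K V" for x
    using that by induction (auto intro: sgen.intros)
  have BH: "B \<subseteq> H" and BR: "B \<subseteq> ?R" using A(9) by auto
  have Bc: "B \<subseteq> carrier G" using BH Hc by auto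
  have FiB: "(?Fi ^^ l) b \<in> B" if "b \<in> B" for l b
    using that A(11) by (induction l) auto
  have FFi: "(?F ^^ l) ((?Fi ^^ l) b) = b" if "b \<in> B" for l b
    using that
  proof (induction l)
    case 0 then show ?case by simp
  next
    case (Suc l)
    have "(?Fi ^^ l) b \<in> carrier G" using FiB[OF Suc.prems] Bc by auto
    hence "?F (?Fi ((?Fi ^^ l) b)) = (?Fi ^^ l) b"
    proof -
      have "(?Fi ^^ l) b \<in> ?F ` carrier G"
        using \<open>(?Fi ^^ l) b \<in> carrier G\<close> bij_betw_imp_surj_on[OF bij] by simp
      from f_inv_into_f[OF this] show ?thesis .
    qed
    moreover have e1: "(?Fi ^^ Suc l) b = ?Fi ((?Fi ^^ l) b)" by simp
    moreover have e2: "(?F ^^ Suc l) y = (?F ^^ l) (?F y)" for y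
      by (simp only: funpow_Suc_right o_def)
    ultimately show ?case using Suc by (simp only:)
  qed
  have RB: "x \<otimes>\<^bsub>G\<^esub> b \<in> ?R" if x: "x \<in> ?R" and b: "b \<in> B" for x b
  proof -
    obtain l v where xl: "x = phi f l \<one>\<^bsub>G\<^esub> v" and l: "l \<ge> 1" and v: "\<forall>i. v i \<in> U"
      using x by (auto simp: reachable_def)
    have "(?Fi ^^ l) b \<in> ?R" using FiB[OF b] BR by auto
    then obtain k u where ku: "(?Fi ^^ l) b = phi f k \<one>\<^bsub>G\<^esub> u" and k: "k \<ge> 1" and u: "\<forall>i. u i \<in> U"
      by (auto simp: reachable_def)
    define w where "w = (\<lambda>i. if i < k then u i else v (i - k))"
    have w: "\<forall>i. w i \<in> U" using u v by (auto simp: w_def)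
    have pc: "phi f k \<one>\<^bsub>G\<^esub> u \<in> carrier G" by (rule phi_carrier[OF lcs _ u]) simp
    have "phi f (k + l) \<one>\<^bsub>G\<^esub> w = phi f l (phi f k \<one>\<^bsub>G\<^esub> w) (\<lambda>i. w (k+i))" by (rule phi_add)
    also have "phi f k \<one>\<^bsub>G\<^esub> w = phi f k \<one>\<^bsub>G\<^esub> u" by (rule phi_cong) (auto simp: w_def)
    also have "(\<lambda>i. w (k+i)) = v" by (auto simp: w_def)
    also have "phi f l (phi f k \<one>\<^bsub>G\<^esub> u) v = phi f l \<one>\<^bsub>G\<^esub> v \<otimes>\<^bsub>G\<^esub> (?F ^^ l) (phi f k \<one>\<^bsub>G\<^esub> u)"
      by (rule phi_split[OF lcs grp pc v])
    also have "(?F ^^ l) (phi f k \<one>\<^bsub>G\<^esub> u) = b" using FFi[OF b, of l] ku by simp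
    finally have "phi f (k + l) \<one>\<^bsub>G\<^esub> w = x \<otimes>\<^bsub>G\<^esub> b" using xl by simp
    moreover have "k + l \<ge> 1" using k by simp
    ultimately show ?thesis using w unfolding reachable_def mem_Collect_eq
      by (intro exI[of _ "k + l"] exI[of _ w]) simp
  qed
  have part2: "x \<in> ?R" if "x \<in> sgen G V" for x
    using that
  proof induction
    case (base v) then show ?case using VB BR by auto
  next
    case (step s v) then show ?case using RB VB by auto
  qed
  have sgG: "x \<in> H" if "x \<in> sgen G V" for x
    using that
  proof induction
    case (base v) then show ?case using VB BH by auto
  next
    case (step s v) then show ?case using VB BH subgroup.m_closed[OF sub] by auto
  qed
  have part1: "?F x \<in> H" if "x \<in> sgen G V" for x
    using that
  proof induction
    case (base v) then show ?case using VB A(10) BH by auto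
  next
    case (step s v)
    have sc: "s \<in> carrier G" using sgG[OF step(1)] Hc by auto
    have vc: "v \<in> carrier G" using step VB Bc by auto
    have "?F v \<in> H" using step VB A(10) BH by auto
    moreover have "?F (s \<otimes>\<^bsub>G\<^esub> v) = ?F s \<otimes>\<^bsub>G\<^esub> ?F v" by (rule hom_mult[OF hom sc vc])
    ultimately show ?case using step subgroup.m_closed[OF sub] by simp
  qed
  have HS: "x \<in> sgen G V" if "x \<in> H" for x
    using sgK that sgH by blast
  show ?thesis using HS part1 part2 by blast
qed

end
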